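(* Let $f^{\mathrm{lgt}}:\mathcal{X}\to\mathbb{R}^K$ satisfy $\|f^{\mathrm{lgt}}(x)\|_2\le L_f$ for all $x\in\mathcal{X}$. Let $\mathcal{L}_{\mathrm{calib}}:\mathbb{R}^K\times\mathbb{R}^K\to[0,1]$ be a per-sample calibration loss that is $L_c$-Lipschitz (w.r.t. $\ell_2$) in its second argument. Let $\Gamma>0$ and $\alpha_-\le\alpha_+$ with $\alpha_+-\alpha_-\ge 2\Gamma$, and let $\mathcal{A}=\{\boldsymbol\alpha=(\alpha_0,\dots,\alpha_K):\ |\alpha_j-\alpha_0|\le\Gamma\ \forall\,1\le j\le K,\ \alpha_-\le\alpha_0\le\alpha_+\}$. Given $n$ i.i.d. validation samples $\mathcal{S}=(X_i,Y_i)_{i=1}^n\sim\mathcal{D}$, let $\boldsymbol\alpha^\star\in\arg\min_{\boldsymbol\alpha\in\mathcal{A}}\mathcal{L}_{\mathrm{calib}}(\boldsymbol\alpha,\mathcal{S})$. Then with probability at least $1-\delta$, $$\mathcal{L}_{\mathrm{calib}}(\boldsymbol\alpha^\star,\mathcal{D})\le\min_{\boldsymbol\alpha\in\mathcal{A}}\mathcal{L}_{\mathrm{calib}}(\boldsymbol\alpha,\mathcal{D})+8\sqrt{\frac{\log(2/\delta)}{n}}+E,$$ where $E=\frac{4}{\sqrt n}\sqrt{\log\big(1+4(\alpha_+-\alpha_-)\sqrt n L_fL_c\big)}$ if $\Gamma\le\frac{1}{8\sqrt n L_fL_c}$, and $E=\frac{4}{\sqrt n}\sqrt{\log\big(\frac{\alpha_+-\alpha_-}{2\Gamma}\big)+(K+1)\log\big(8\Gamma\sqrt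 nL_fL_c\big)}$ otherwise.
   Context: Multiclass setup: $X\in\mathcal{X}$, $Y\in\{1,\dots,K\}$, $(X,Y)\sim\mathcal{D}$. The classifier is $f(X)=\mathrm{softmax}(f^{\mathrm{lgt}}(X))$ with predicted label $\hat Y=\arg\max_k f(X)_k$. For a scalar $\alpha$, the temperature-scaled classifier is $f_\alpha(X)=\mathrm{softmax}(\alpha f^{\mathrm{lgt}}(X))$. In $\mathcal{L}_{\mathrm{calib}}(Y,\cdot)$ the label $Y$ is viewed as a vector in $\mathbb{R}^K$ (e.g. one-hot). Class-wise temperature scaling losses: $\mathcal{L}_{\mathrm{calib}}(\boldsymbol\alpha,\mathcal{S})=\frac1n\sum_{i=1}^n\mathcal{L}_{\mathrm{calib}}(Y_i,f_{\alpha_{\hat Y_i}}(X_i))$ and $\mathcal{L}_{\mathrm{calib}}(\boldsymbol\alpha,\mathcal{D})=\mathbb{E}_{(X,Y)\sim\mathcal{D}}[\mathcal{L}_{\mathrm{calib}}(Y,f_{\alpha_{\hat Y}}(X))]$, where $\hat Y=\hat Y(X)$ is the predicted label of the (uncalibrated) classifier $f$ and $\alpha_{\hat Y}$ is the $\hat Y$-th coordinate of $\boldsymbol\alpha$ (the coordinate $\alpha_0$ enters only through the constraint set). *)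

theory Defs
  imports "HOL-Probability.Probability"
begin

text \<open>Classes are the elements of a finite type 'k, with K = CARD('k).
  Vectors in R^K are real^'k (Euclidean l2 norm).
  A parameter alpha = (alpha_0, alpha_1..alpha_K) is a pair (alpha_0, a) with a :: real^'k.\<close>

definition softmax :: "real^'k::finite \<Rightarrow> real^'k" where
  "softmax z = (\<chi> k. exp (z $ k) / (\<Sum>j\<in>UNIV. exp (z $ j)))"

definition temp_scaled :: "('x \<Rightarrow> real^'k::finite) \<Rightarrow> real \<Rightarrow> 'x \<Rightarrow> real^'k" where
  "temp_scaled f a x = softmax (a *\<^sub>R f x)"

definition onehot :: "'k::finite \<Rightarrow> real^'k" where
  "onehot y = (\<chi> j. if j = y then 1 else 0)"

definition cw_loss_emp ::
  "(real^'k \<Rightarrow> real^'k \<Rightarrow> real) \<Rightarrow> ('x \<Rightarrow> real^'k::finite) \<Rightarrow> ('x \<Rightarrow> 'k)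
     \<Rightarrow> real \<times> (real^'k) \<Rightarrow> nat \<Rightarrow> (nat \<Rightarrow> 'x \<times> 'k) \<Rightarrow> real" where
  "cw_loss_emp L f yhat \<alpha> n S =
     (1 / real n) * (\<Sum>i<n. L (onehot (snd (S i)))
        (temp_scaled f (snd \<alpha> $ yhat (fst (S i))) (fst (S i))))"

definition cw_loss_pop ::
  "(real^'k \<Rightarrow> real^'k \<Rightarrow> real) \<Rightarrow> ('x \<Rightarrow> real^'k::finite) \<Rightarrow> ('x \<Rightarrow> 'k)
     \<Rightarrow> real \<times> (real^'k) \<Rightarrow> ('x \<times> 'k) measure \<Rightarrow> real" where
  "cw_loss_pop L f yhat \<alpha> D =
     (\<integral>p. L (onehot (snd p)) (temp_scaled f (snd \<alpha> $ yhat (fst p)) (fst p)) \<partial>D)"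

definition param_set :: "real \<Rightarrow> real \<Rightarrow> real \<Rightarrow> (real \<times> (real^'k::finite)) set" where
  "param_set \<Gamma> am ap =
     {\<alpha>. (\<forall>j. \<bar>snd \<alpha> $ j - fst \<alpha>\<bar> \<le> \<Gamma>) \<and> am \<le> fst \<alpha> \<and> fst \<alpha> \<le> ap}"

end

theory Submission
  imports Defs
begin


lemma softmax_comp: "softmax (r *\<^sub>R z) $ k = exp (r * z$k) / (\<Sum>j\<in>UNIV. exp (r * z$j))"
  by (simp add: softmax_def)

lemma sum_exp_pos: "(\<Sum>j\<in>(UNIV::'k::finite set). exp (g j :: real)) > 0"
  using sum_pos[of "UNIV::'k set" "\<lambda>j. exp (g j)"] by simp

lemma deriv_phi:
  fixes z :: "real^'k::finite"
  defines "S \<equiv> \<lambda>r. (\<Sum>j\<in>UNIV. exp (r * z$j))"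
  shows "((\<lambda>r. exp (r * z$k) / S r) has_real_derivative
     (exp (r * z$k) / S r) * (z$k - (\<Sum>j\<in>UNIV. exp (r * z$j) / S r * z$j))) (at r)"
proof -
  have Sp: "S r > 0" unfolding S_def by (rule sum_exp_pos)
  have dS: "(S has_real_derivative (\<Sum>j\<in>UNIV. exp (r * z$j) * z$j)) (at r)"
    unfolding S_def by (auto intro!: derivative_eq_intros)
  have "((\<lambda>r. exp (r * z$k) / S r) has_real_derivative
     ((exp (r * z$k) * z$k) * S r - exp (r * z$k) * (\<Sum>j\<in>UNIV. exp (r * z$j) * z$j)) / (S r * S r)) (at r)"
    by (rule DERIV_divide[OF _ dS]) (use Sp in \<open>auto intro!: derivative_eq_intros\<close>)
  moreover have "((exp (r * z$k) * z$k) * S r - exp (r * z$k) * (\<Sum>j\<in>UNIV. exp (r * z$j) * z$j)) / (S r * S r)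
     = (exp (r * z$k) / S r) * (z$k - (\<Sum>j\<in>UNIV. exp (r * z$j) / S r * z$j))"
    using Sp by (simp add: field_simps sum_divide_distrib[symmetric] sum_distrib_left)
  ultimately show ?thesis by simp
qed

lemma softmax_sum1: "(\<Sum>k\<in>UNIV. softmax (r *\<^sub>R z) $ k) = 1"
proof -
  have "(\<Sum>j\<in>UNIV. exp (r * z$j)) > 0" by (rule sum_exp_pos)
  then show ?thesis by (simp add: softmax_comp sum_divide_distrib[symmetric])
qed

lemma softmax_nonneg: "softmax (r *\<^sub>R z) $ k \<ge> 0"
  using sum_exp_pos[of "\<lambda>j. r * z$j"] by (simp add: softmax_comp)

lemma softmax_lip_aux:
  fixes z :: "real^'k::finite"
  assumes st: "s < t"
  shows "norm (softmax (t *\<^sub>R z) - softmax (s *\<^sub>R z)) \<le> 2 * (t - s) * norm z"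
proof -
  define u where "u = softmax (t *\<^sub>R z) - softmax (s *\<^sub>R z)"
  define phi where "phi = (\<lambda>k r. softmax (r *\<^sub>R z) $ k)"
  define h where "h = (\<lambda>r. \<Sum>k\<in>UNIV. u$k * phi k r)"
  define h' where "h' = (\<lambda>r. \<Sum>k\<in>UNIV. u$k * (phi k r * (z$k - (\<Sum>j\<in>UNIV. phi j r * z$j))))"
  have dphi: "(phi k has_real_derivative (phi k r * (z$k - (\<Sum>j\<in>UNIV. phi j r * z$j)))) (at r)" for k r
    unfolding phi_def softmax_comp using deriv_phi[of z k r] by simp
  have dh: "(h has_real_derivative h' r) (at r)" for r
    unfolding h_def h'_def by (auto intro!: derivative_eq_intros dphi simp: mult.commute)
  obtain \<xi> where "h t - h s = (t - s) * h' \<xi>"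
    using MVT2[OF st, of h h'] dh by blast
  moreover have "h t - h s = norm u ^ 2"
    by (simp add: h_def phi_def u_def power2_norm_eq_inner inner_vec_def sum_subtractf[symmetric] algebra_simps)
  moreover have "\<bar>h' \<xi>\<bar> \<le> norm u * (2 * norm z)"
  proof -
    have m: "\<bar>\<Sum>j\<in>UNIV. phi j \<xi> * z$j\<bar> \<le> norm z"
    proof -
      have "\<bar>\<Sum>j\<in>UNIV. phi j \<xi> * z$j\<bar> \<le> (\<Sum>j\<in>UNIV. phi j \<xi> * norm z)"
        by (rule order_trans[OF sum_abs]) (auto intro!: sum_mono simp: abs_mult phi_def softmax_nonneg mult_left_mono component_le_norm_cart)
      also have "\<dots> = norm z" by (simp add: sum_distrib_right[symmetric] phi_def softmax_sum1)
      finally show ?thesis .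
    qed
    have "\<bar>h' \<xi>\<bar> \<le> (\<Sum>k\<in>UNIV. norm u * (phi k \<xi> * (2 * norm z)))"
      unfolding h'_def
    proof (rule order_trans[OF sum_abs], rule sum_mono)
      fix k
      have a: "\<bar>u$k\<bar> \<le> norm u" by (rule component_le_norm_cart)
      have b: "\<bar>z$k - (\<Sum>j\<in>UNIV. phi j \<xi> * z$j)\<bar> \<le> 2 * norm z"
        using m component_le_norm_cart[of z k] by linarith
      have p: "phi k \<xi> \<ge> 0" by (simp add: phi_def softmax_nonneg)
      show "\<bar>u$k * (phi k \<xi> * (z$k - (\<Sum>j\<in>UNIV. phi j \<xi> * z$j)))\<bar> \<le> norm u * (phi k \<xi> * (2 * norm z))"
        unfolding abs_mult using a b p
        by (intro mult_mono) (auto intro: mult_left_mono)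
    qed
    also have "\<dots> = norm u * (2 * norm z)"
      by (simp add: sum_distrib_left[symmetric] sum_distrib_right[symmetric] phi_def softmax_sum1)
    finally show ?thesis .
  qed
  ultimately have "norm u ^ 2 \<le> (t - s) * (norm u * (2 * norm z))"
    using st by (smt (verit) mult_left_mono abs_ge_self)
  then have "norm u * norm u \<le> norm u * (2 * (t - s) * norm z)"
    by (simp add: power2_eq_square algebra_simps)
  then show ?thesis
    unfolding u_def[symmetric]
    using st by (cases "norm u = 0") (auto simp: mult_le_cancel_left)
qed

lemma softmax_lip:
  fixes z :: "real^'k::finite"
  shows "norm (softmax (t *\<^sub>R z) - softmax (s *\<^sub>R z)) \<le> 2 * \<bar>t - s\<bar> * norm z"
proof (cases s t rule: linorder_cases)
  case less then show ?thesis using softmax_lip_aux[OF less] by simp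
next
  case greater then show ?thesis using softmax_lip_aux[OF greater, of z] by (simp add: norm_minus_commute)
qed simp

definition ell :: "(real^'k \<Rightarrow> real^'k \<Rightarrow> real) \<Rightarrow> ('x \<Rightarrow> real^'k::finite) \<Rightarrow> ('x \<Rightarrow> 'k)
     \<Rightarrow> real^'k \<Rightarrow> 'x \<times> 'k \<Rightarrow> real" where
  "ell L f yhat a p = L (onehot (snd p)) (temp_scaled f (a $ yhat (fst p)) (fst p))"

lemma emp_eq: "cw_loss_emp L f yhat \<alpha> n S = (1 / real n) * (\<Sum>i<n. ell L f yhat (snd \<alpha>) (S i))"
  by (simp add: cw_loss_emp_def ell_def)

lemma pop_eq: "cw_loss_pop L f yhat \<alpha> D = (\<integral>p. ell L f yhat (snd \<alpha>) p \<partial>D)"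
  by (simp add: cw_loss_pop_def ell_def)

lemma ell_lip:
  assumes L_lip: "\<forall>u v w. \<bar>L u v - L u w\<bar> \<le> Lc * dist v w"
    and bound_f: "\<forall>x. norm (f x) \<le> Lf" and Lc: "Lc > 0"
    and close: "\<forall>j. \<bar>a $ j - b $ j\<bar> \<le> \<rho>"
  shows "\<bar>ell L f yhat a p - ell L f yhat b p\<bar> \<le> 2 * Lf * Lc * \<rho>"
proof -
  let ?x = "fst p"
  have "\<bar>ell L f yhat a p - ell L f yhat b p\<bar> \<le> Lc * dist (softmax ((a $ yhat ?x) *\<^sub>R f ?x)) (softmax ((b $ yhat ?x) *\<^sub>R f ?x))"
    using L_lip by (simp add: ell_def temp_scaled_def)
  also have "\<dots> \<le> Lc * (2 * \<bar>a $ yhat ?x - b $ yhat ?x\<bar> * norm (f ?x))"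
    using Lc softmax_lip[of "a $ yhat ?x" "f ?x" "b $ yhat ?x"] by (simp add: dist_norm mult.assoc)
  also have "\<dots> \<le> Lc * (2 * \<rho> * Lf)"
    using Lc close bound_f
    by (intro mult_left_mono mult_mono) auto
  finally show ?thesis by (simp add: algebra_simps)
qed

lemma softmax_cont: "continuous_on UNIV (softmax :: real^'k::finite \<Rightarrow> real^'k)"
proof -
  have "continuous_on UNIV (\<lambda>z::real^'k. \<chi> k. exp (z $ k) / (\<Sum>j\<in>UNIV. exp (z $ j)))"
    using sum_exp_pos
    by (intro continuous_on_vec_lambda continuous_intros) (auto simp: less_le)
  then show ?thesis by (simp add: softmax_def[abs_def])
qed

lemma ell_meas:
  fixes D :: "('x \<times> 'k::finite) measure"
  assumes meas_f: "(\<lambda>p. f (fst p)) \<in> borel_measurable D"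
    and meas_yhat: "(\<lambda>p. yhat (fst p)) \<in> measurable D (count_space UNIV)"
    and meas_y: "snd \<in> measurable D (count_space UNIV)"
    and meas_L: "(\<lambda>(u, v). L u v) \<in> borel_measurable borel"
  shows "ell L f yhat a \<in> borel_measurable D"
proof -
  have m1: "(\<lambda>p. onehot (snd p)) \<in> borel_measurable D"
    using measurable_compose_countable[of "\<lambda>y p. onehot y" D borel snd] meas_y by simp
  have m2: "(\<lambda>p. a $ yhat (fst p)) \<in> borel_measurable D"
    using measurable_compose_countable[of "\<lambda>y p. a $ y" D borel "\<lambda>p. yhat (fst p)"] meas_yhat by simp
  have m3: "(\<lambda>p. softmax ((a $ yhat (fst p)) *\<^sub>R f (fst p))) \<in> borel_measurable D"
    by (rule measurable_compose[OF borel_measurable_scaleR[OF m2 meas_f]])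
       (rule borel_measurable_continuous_onI[OF softmax_cont])
  have "(\<lambda>p. (onehot (snd p), softmax ((a $ yhat (fst p)) *\<^sub>R f (fst p)))) \<in> measurable D (borel \<Otimes>\<^sub>M borel)"
    using m1 m3 by (rule measurable_Pair)
  then have "(\<lambda>p. (onehot (snd p), softmax ((a $ yhat (fst p)) *\<^sub>R f (fst p)))) \<in> borel_measurable D"
    by (simp add: borel_prod)
  from measurable_compose[OF this meas_L] have "(\<lambda>x. L (onehot (snd x)) (softmax (a $ yhat (fst x) *\<^sub>R f (fst x)))) \<in> borel_measurable D"
    by simp
  moreover have "ell L f yhat a = (\<lambda>x. L (onehot (snd x)) (softmax (a $ yhat (fst x) *\<^sub>R f (fst x))))"
    by (simp add: fun_eq_iff ell_def temp_scaled_def)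
  ultimately show ?thesis by simp
qed



lemma indep_coords:
  fixes n :: nat
  assumes D: "prob_space D"
  shows "prob_space.indep_vars (PiM {..<n} (\<lambda>_. D)) (\<lambda>_. D) (\<lambda>i S. S i) {..<n}"
proof (cases "n = 0")
  case True
  then show ?thesis
    using prob_space_PiM[of "{..<n}" "\<lambda>_. D"] D
    by (simp add: prob_space.indep_vars_def prob_space.indep_sets_def)
next
  case False
  interpret P: prob_space "PiM {..<n} (\<lambda>_. D)" by (rule prob_space_PiM) (simp add: D)
  have ne: "{..<n} \<noteq> {}" using False by auto
  show ?thesis
  proof (subst P.indep_vars_iff_distr_eq_PiM'[OF ne])
    show "(\<lambda>S. S i) \<in> measurable (PiM {..<n} (\<lambda>_. D)) D" if "i \<in> {..<n}" for i
      using that by simp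
    have "distr (PiM {..<n} (\<lambda>_. D)) (PiM {..<n} (\<lambda>_. D)) (\<lambda>x. \<lambda>i\<in>{..<n}. x i)
        = distr (PiM {..<n} (\<lambda>_. D)) (PiM {..<n} (\<lambda>_. D)) (\<lambda>x. x)"
      by (intro distr_cong) (auto simp: space_PiM PiE_def extensional_def fun_eq_iff)
    also have "\<dots> = PiM {..<n} (\<lambda>_. D)" by simp
    also have "\<dots> = (\<Pi>\<^sub>M i\<in>{..<n}. distr (PiM {..<n} (\<lambda>_. D)) D (\<lambda>S. S i))"
      by (intro PiM_cong refl) (subst distr_PiM_component, auto simp: D)
    finally show "distr (PiM {..<n} (\<lambda>_. D)) (PiM {..<n} (\<lambda>_. D)) (\<lambda>x. \<lambda>i\<in>{..<n}. x i)
        = (\<Pi>\<^sub>M i\<in>{..<n}. distr (PiM {..<n} (\<lambda>_. D)) D (\<lambda>S. S i))" .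
  qed
qed

lemma concentration:
  fixes D :: "'p measure" and G :: "'g set" and g :: "'g \<Rightarrow> 'p \<Rightarrow> real"
  assumes D: "prob_space D" and finG: "finite G"
    and meas: "\<And>a. a \<in> G \<Longrightarrow> g a \<in> borel_measurable D"
    and rng: "\<And>a p. 0 \<le> g a p \<and> g a p \<le> 1"
    and n: "n \<ge> 1" and cardG: "real (card G) \<le> Nb" and Nb: "Nb \<ge> 1"
    and \<delta>: "0 < \<delta>" "\<delta> < 1"
  shows "\<exists>A\<in>sets (PiM {..<n} (\<lambda>_. D)). measure (PiM {..<n} (\<lambda>_. D)) A \<ge> 1 - \<delta> \<and>
     (\<forall>S\<in>A. \<forall>a\<in>G. \<bar>(1 / real n) * (\<Sum>i<n. g a (S i)) - (\<integral>p. g a p \<partial>D)\<bar> \<le> sqrt (ln (2 * Nb / \<delta>) / (2 * real n)))"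
proof -
  define M where "M = PiM {..<n} (\<lambda>_. D)"
  interpret P: prob_space M unfolding M_def by (rule prob_space_PiM) (simp add: D)
  interpret DD: prob_space D by (rule D)
  define t where "t = sqrt (ln (2 * Nb / \<delta>) / (2 * real n))"
  have lnpos: "ln (2 * Nb / \<delta>) \<ge> 0" using Nb \<delta> by (simp add: field_simps)
  have t0: "t \<ge> 0" unfolding t_def using lnpos by simp
  have t2: "t^2 = ln (2 * Nb / \<delta>) / (2 * real n)" unfolding t_def using lnpos n by simp
  define bad where "bad = (\<lambda>a. {S\<in>space M. \<bar>(\<Sum>i<n. g a (S i)) - real n * (\<integral>p. g a p \<partial>D)\<bar> \<ge> real n * t})"
  have bad_meas: "bad a \<in> sets M" if "a \<in> G" for a
  proof -
    have "(\<lambda>S. (\<Sum>i<n. g a (S i))) \<in> borel_measurable M"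
      unfolding M_def using meas[OF that] by measurable
    then show ?thesis unfolding bad_def by measurable
  qed
  have bad_prob: "P.prob (bad a) \<le> \<delta> / Nb" if a: "a \<in> G" for a
  proof -
    interpret H: Hoeffding_ineq M "{..<n}" "\<lambda>i S. g a (S i)" "\<lambda>_. 0" "\<lambda>_. 1" "real n * (\<integral>p. g a p \<partial>D)"
    proof unfold_locales
      show "finite {..<n}" by simp
      show "P.indep_vars (\<lambda>_. borel) (\<lambda>i S. g a (S i)) {..<n}"
        using P.indep_vars_compose2[OF indep_coords[OF D, of n, folded M_def], of "\<lambda>_. g a" "\<lambda>_. borel"] meas[OF a]
        by simp
      show "AE x in M. g a (x i) \<in> {0..1}" for i using rng by simp
      have "P.expectation (\<lambda>S. g a (S i)) = (\<integral>p. g a p \<partial>D)" if "i < n" for i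
      proof -
        have "P.expectation (\<lambda>S. g a (S i)) = (\<integral>p. g a p \<partial>distr M D (\<lambda>S. S i))"
          using meas[OF a] that unfolding M_def by (subst integral_distr) auto
        also have "distr M D (\<lambda>S. S i) = D"
          unfolding M_def using that D by (subst distr_PiM_component) auto
        finally show ?thesis .
      qed
      then show "real n * (\<integral>p. g a p \<partial>D) \<equiv> (\<Sum>i<n. P.expectation (\<lambda>S. g a (S i)))"
        by simp
    qed
    have "P.prob (bad a) \<le> 2 * exp (- 2 * (real n * t)\<^sup>2 / (\<Sum>i<n. (1 - 0)\<^sup>2))"
      unfolding bad_def
      by (rule H.Hoeffding_ineq_abs_ge) (use t0 n in auto)
    also have "- 2 * (real n * t)\<^sup>2 / (\<Sum>i<n. (1 - 0)\<^sup>2) = - ln (2 * Nb / \<delta>)"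
    proof -
      have e: "2 * real n * t^2 = ln (2 * Nb / \<delta>)" using n by (simp add: t2)
      show ?thesis using n e by (simp add: power2_eq_square algebra_simps)
    qed
    also have "2 * exp (- ln (2 * Nb / \<delta>)) = \<delta> / Nb"
      using Nb \<delta> by (simp add: exp_minus)
    finally show ?thesis .
  qed
  define A where "A = space M - (\<Union>a\<in>G. bad a)"
  have Ameas: "A \<in> sets M" unfolding A_def using bad_meas finG by auto
  have "P.prob (\<Union>a\<in>G. bad a) \<le> (\<Sum>a\<in>G. P.prob (bad a))"
    by (rule measure_UNION_le[OF finG bad_meas])
  also have "\<dots> \<le> (\<Sum>a\<in>G. \<delta> / Nb)" by (rule sum_mono[OF bad_prob])
  also have "\<dots> = real (card G) * (\<delta> / Nb)" by simp
  also have "\<dots> \<le> Nb * (\<delta> / Nb)" using cardG \<delta> Nb by (intro mult_right_mono) auto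
  also have "\<dots> = \<delta>" using Nb by simp
  finally have ub: "P.prob (\<Union>a\<in>G. bad a) \<le> \<delta>" .
  have "P.prob A = 1 - P.prob (\<Union>a\<in>G. bad a)"
    unfolding A_def using bad_meas finG by (intro P.prob_compl) auto
  with ub have PA: "P.prob A \<ge> 1 - \<delta>" by simp
  have good: "\<bar>(1 / real n) * (\<Sum>i<n. g a (S i)) - (\<integral>p. g a p \<partial>D)\<bar> \<le> t" if "S \<in> A" "a \<in> G" for S a
  proof -
    have "\<bar>(\<Sum>i<n. g a (S i)) - real n * (\<integral>p. g a p \<partial>D)\<bar> < real n * t"
      using that unfolding A_def bad_def by auto
    then have "\<bar>(\<Sum>i<n. g a (S i)) - real n * (\<integral>p. g a p \<partial>D)\<bar> / real n \<le> t"
      using n by (simp add: field_simps)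
    moreover have "\<bar>(\<Sum>i<n. g a (S i)) - real n * (\<integral>p. g a p \<partial>D)\<bar> / real n
        = \<bar>(1 / real n) * (\<Sum>i<n. g a (S i)) - (\<integral>p. g a p \<partial>D)\<bar>"
      using n by (simp add: field_simps abs_divide[symmetric])
    ultimately show ?thesis by simp
  qed
  show ?thesis
    using Ameas PA good unfolding M_def t_def by blast
qed



lemma ln2_half: "ln (2::real) \<ge> 1/2"
proof -
  have "ln (1/2::real) \<le> 1/2 - 1" by (rule ln_le_minus_one) simp
  then show ?thesis by (simp add: ln_div)
qed

lemma two_sqrt_half: 
  assumes "n > 0" "X \<ge> 0"
  shows "2 * sqrt (X / (2 * n)) = sqrt (2 * X) / sqrt n"
proof -
  have h: "2 * X / n = 4 * (X / (2 * n))" using assms by (simp add: field_simps)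
  have "sqrt (2 * X / n) = 2 * sqrt (X / (2 * n))"
    unfolding h real_sqrt_mult by simp
  then show ?thesis by (simp add: real_sqrt_divide)
qed

lemma core1:
  fixes l q \<Delta> n :: real
  assumes l: "l \<ge> 1/2" and q: "q \<ge> 0" and n: "n > 0" and \<Delta>: "\<Delta> \<le> 2 / sqrt n"
  shows "2 * sqrt ((l + q) / (2 * n)) + \<Delta> \<le> 8 * sqrt (l / n) + 4 / sqrt n * sqrt q"
proof -
  have sn: "sqrt n > 0" using n by simp
  have "2 * sqrt ((l + q) / (2 * n)) = sqrt (2 * l + 2 * q) / sqrt n"
    using two_sqrt_half[OF n, of "l + q"] l q by (simp add: algebra_simps)
  also have "sqrt (2 * l + 2 * q) \<le> sqrt (2 * l) + sqrt (2 * q)"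
    by (rule sqrt_add_le_add_sqrt) (use l q in auto)
  also have "sqrt (2 * l) \<le> 2 * sqrt l"
  proof -
    have "sqrt (2 * l) \<le> sqrt (4 * l)" using l by simp
    also have "\<dots> = 2 * sqrt l" by (simp add: real_sqrt_mult)
    finally show ?thesis .
  qed
  also have "sqrt (2 * q) \<le> 2 * sqrt q"
  proof -
    have "sqrt (2 * q) \<le> sqrt (4 * q)" using q by simp
    also have "\<dots> = 2 * sqrt q" by (simp add: real_sqrt_mult)
    finally show ?thesis .
  qed
  finally have a: "2 * sqrt ((l + q) / (2 * n)) \<le> (2 * sqrt l + 2 * sqrt q) / sqrt n"
    using sn by (simp add: divide_right_mono)
  have sl: "sqrt l \<ge> 1/3"
  proof -
    have "sqrt (1/9) \<le> sqrt l" using l by simp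
    moreover have "sqrt (1/9::real) = 1/3" by (simp add: real_sqrt_divide)
    ultimately show ?thesis by simp
  qed
  have "(2 * sqrt l + 2 * sqrt q) / sqrt n + 2 / sqrt n \<le> (8 * sqrt l + 4 * sqrt q) / sqrt n"
    unfolding add_divide_distrib[symmetric] using sn sl real_sqrt_ge_zero[OF q] by (intro divide_right_mono) linarith+
  moreover have "8 * sqrt (l / n) + 4 / sqrt n * sqrt q = (8 * sqrt l + 4 * sqrt q) / sqrt n"
    by (simp add: real_sqrt_divide add_divide_distrib)
  ultimately show ?thesis using a \<Delta> by linarith
qed

lemma core2:
  fixes l q e \<Delta> n :: real
  assumes l: "l \<ge> ln 2" and e: "e \<ge> 0" and q: "q \<le> ln 2 + e" and n: "n > 0"
    and \<Delta>: "\<Delta> \<le> 4 / sqrt n"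
  shows "2 * sqrt ((l + q) / (2 * n)) + \<Delta> \<le> 8 * sqrt (l / n) + 4 / sqrt n * sqrt e"
proof -
  have l2: "l \<ge> 1/2" using l ln2_half by linarith
  have sn: "sqrt n > 0" using n by simp
  have "2 * sqrt ((l + q) / (2 * n)) \<le> 2 * sqrt ((2 * l + e) / (2 * n))"
    using q l n by (simp add: divide_right_mono)
  also have "\<dots> = sqrt (4 * l + 2 * e) / sqrt n"
    using two_sqrt_half[OF n, of "2 * l + e"] l2 e by (simp add: algebra_simps)
  also have "sqrt (4 * l + 2 * e) \<le> sqrt (4 * l) + sqrt (2 * e)"
    by (rule sqrt_add_le_add_sqrt) (use l2 e in auto)
  also have "sqrt (4 * l) = 2 * sqrt l" by (simp add: real_sqrt_mult)
  also have "sqrt (2 * e) \<le> 2 * sqrt e"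
  proof -
    have "sqrt (2 * e) \<le> sqrt (4 * e)" using e by simp
    also have "\<dots> = 2 * sqrt e" by (simp add: real_sqrt_mult)
    finally show ?thesis .
  qed
  finally have a: "2 * sqrt ((l + q) / (2 * n)) \<le> (2 * sqrt l + 2 * sqrt e) / sqrt n"
    using sn by (simp add: divide_right_mono)
  have sl: "sqrt l \<ge> 2/3"
  proof -
    have "sqrt (4/9) \<le> sqrt l" using l2 by simp
    moreover have "sqrt (4/9::real) = 2/3" by (simp add: real_sqrt_divide)
    ultimately show ?thesis by simp
  qed
  have "(2 * sqrt l + 2 * sqrt e) / sqrt n + 4 / sqrt n \<le> (8 * sqrt l + 4 * sqrt e) / sqrt n"
    unfolding add_divide_distrib[symmetric] using sn sl real_sqrt_ge_zero[OF e] by (intro divide_right_mono) linarith+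
  moreover have "8 * sqrt (l / n) + 4 / sqrt n * sqrt e = (8 * sqrt l + 4 * sqrt e) / sqrt n"
    by (simp add: real_sqrt_divide add_divide_distrib)
  ultimately show ?thesis using a \<Delta> by linarith
qed



lemma generic_bound:
  fixes D :: "('x \<times> 'k::finite) measure"
    and f :: "'x \<Rightarrow> real^'k"
    and yhat :: "'x \<Rightarrow> 'k"
    and L :: "real^'k \<Rightarrow> real^'k \<Rightarrow> real"
    and Lf Lc \<Gamma> am ap \<delta> :: real
    and n :: nat
    and astar :: "(nat \<Rightarrow> 'x \<times> 'k) \<Rightarrow> real \<times> (real^'k)"
    and G :: "(real^'k) set"
  assumes D: "prob_space D"
    and meas_f: "(\<lambda>p. f (fst p)) \<in> borel_measurable D"
    and meas_yhat: "(\<lambda>p. yhat (fst p)) \<in> measurable D (count_space UNIV)"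
    and meas_y: "snd \<in> measurable D (count_space UNIV)"
    and meas_L: "(\<lambda>(u, v). L u v) \<in> borel_measurable borel"
    and bound_f: "\<forall>x. norm (f x) \<le> Lf"
    and Lc_pos: "Lc > 0"
    and L_range: "\<forall>u v. 0 \<le> L u v \<and> L u v \<le> 1"
    and L_lip: "\<forall>u v w. \<bar>L u v - L u w\<bar> \<le> Lc * dist v w"
    and am_ap: "am \<le> ap" and \<Gamma>_pos: "\<Gamma> > 0"
    and n_pos: "n \<ge> 1"
    and \<delta>: "0 < \<delta>" "\<delta> < 1"
    and astar_min: "\<forall>S. astar S \<in> param_set \<Gamma> am ap \<and>
        (\<forall>\<alpha>\<in>param_set \<Gamma> am ap. cw_loss_emp L f yhat (astar S) n S \<le> cw_loss_emp L f yhat \<alpha> n S)"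
    and finG: "finite G" and cardG: "real (card G) \<le> Nb" and Nb: "Nb \<ge> 1"
    and cover: "\<forall>\<alpha>\<in>param_set \<Gamma> am ap. \<exists>a\<in>G. \<forall>j. \<bar>snd \<alpha> $ j - a $ j\<bar> \<le> \<rho>"
  shows "\<exists>A\<in>sets (PiM {..<n} (\<lambda>_. D)).
     measure (PiM {..<n} (\<lambda>_. D)) A \<ge> 1 - \<delta> \<and>
     (\<forall>S\<in>A. cw_loss_pop L f yhat (astar S) D
        \<le> (INF \<alpha>\<in>param_set \<Gamma> am ap. cw_loss_pop L f yhat \<alpha> D)
           + 2 * sqrt (ln (2 * Nb / \<delta>) / (2 * real n)) + 4 * (2 * Lf * Lc * \<rho>))"
proof -
  interpret DD: prob_space D by (rule D)
  let ?g = "ell L f yhat"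
  define t where "t = sqrt (ln (2 * Nb / \<delta>) / (2 * real n))"
  define \<Delta> where "\<Delta> = 2 * Lf * Lc * \<rho>"
  have gm: "?g a \<in> borel_measurable D" for a
    by (rule ell_meas[OF meas_f meas_yhat meas_y meas_L])
  have grng: "0 \<le> ?g a p \<and> ?g a p \<le> 1" for a p
    using L_range by (simp add: ell_def)
  have gint: "integrable D (?g a)" for a
    by (rule DD.integrable_const_bound[where B=1]) (use grng gm in auto)
  have ex: "\<exists>A\<in>sets (PiM {..<n} (\<lambda>_. D)). measure (PiM {..<n} (\<lambda>_. D)) A \<ge> 1 - \<delta> \<and>
     (\<forall>S\<in>A. \<forall>a\<in>G. \<bar>(1 / real n) * (\<Sum>i<n. ?g a (S i)) - (\<integral>p. ?g a p \<partial>D)\<bar> \<le> t)"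
    unfolding t_def by (rule concentration[OF D finG gm grng n_pos cardG Nb \<delta>])
  then obtain A where A: "A \<in> sets (PiM {..<n} (\<lambda>_. D))" "measure (PiM {..<n} (\<lambda>_. D)) A \<ge> 1 - \<delta>"
    and good: "\<forall>S\<in>A. \<forall>a\<in>G. \<bar>(1 / real n) * (\<Sum>i<n. ?g a (S i)) - (\<integral>p. ?g a p \<partial>D)\<bar> \<le> t"
    by (elim bexE conjE) (rule that)
  have dev: "\<bar>cw_loss_emp L f yhat \<alpha> n S - cw_loss_pop L f yhat \<alpha> D\<bar> \<le> t + 2 * \<Delta>"
    if S: "S \<in> A" and \<alpha>: "\<alpha> \<in> param_set \<Gamma> am ap" for S \<alpha>
  proof -
    obtain a where a: "a \<in> G" and cl: "\<forall>j. \<bar>snd \<alpha> $ j - a $ j\<bar> \<le> \<rho>"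
      using cover \<alpha> by blast
    have pt: "\<bar>?g (snd \<alpha>) p - ?g a p\<bar> \<le> \<Delta>" for p
      unfolding \<Delta>_def by (rule ell_lip[OF L_lip bound_f Lc_pos cl])
    have e1: "\<bar>(1 / real n) * (\<Sum>i<n. ?g (snd \<alpha>) (S i)) - (1 / real n) * (\<Sum>i<n. ?g a (S i))\<bar> \<le> \<Delta>"
    proof -
      have "\<bar>(\<Sum>i<n. ?g (snd \<alpha>) (S i)) - (\<Sum>i<n. ?g a (S i))\<bar> \<le> (\<Sum>i<n. \<Delta>)"
        unfolding sum_subtractf[symmetric] by (rule order_trans[OF sum_abs sum_mono]) (rule pt)
      then have "\<bar>(\<Sum>i<n. ?g (snd \<alpha>) (S i)) - (\<Sum>i<n. ?g a (S i))\<bar> / real n \<le> \<Delta>"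
        using n_pos by (simp add: field_simps)
      then show ?thesis
        by (simp add: diff_divide_distrib[symmetric] abs_divide)
    qed
    have e2: "\<bar>(\<integral>p. ?g (snd \<alpha>) p \<partial>D) - (\<integral>p. ?g a p \<partial>D)\<bar> \<le> \<Delta>"
    proof -
      have "\<bar>(\<integral>p. ?g (snd \<alpha>) p \<partial>D) - (\<integral>p. ?g a p \<partial>D)\<bar> = \<bar>\<integral>p. ?g (snd \<alpha>) p - ?g a p \<partial>D\<bar>"
        using gint by (simp add: integral_diff)
      also have "\<dots> \<le> (\<integral>p. \<bar>?g (snd \<alpha>) p - ?g a p\<bar> \<partial>D)"
        by (rule integral_abs_bound)
      also have "\<dots> \<le> (\<integral>p. \<Delta> \<partial>D)"
        using gint pt by (intro integral_mono) auto
      also have "\<dots> = \<Delta>" by (simp add: DD.prob_space)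
      finally show ?thesis .
    qed
    have g: "\<bar>(1 / real n) * (\<Sum>i<n. ?g a (S i)) - (\<integral>p. ?g a p \<partial>D)\<bar> \<le> t"
      using good S a by blast
    show ?thesis
      unfolding emp_eq pop_eq abs_le_iff using e1 e2 g unfolding abs_le_iff by linarith
  qed
  show ?thesis
  proof (intro bexI[OF _ A(1)] conjI A(2) ballI)
    fix S assume S: "S \<in> A"
    have ne: "param_set \<Gamma> am ap \<noteq> {}"
    proof -
      have "(am, (\<chi> j. am)) \<in> param_set \<Gamma> am ap" using am_ap \<Gamma>_pos by (simp add: param_set_def)
      then show ?thesis by blast
    qed
    have "cw_loss_pop L f yhat (astar S) D - (2 * t + 4 * \<Delta>) \<le> cw_loss_pop L f yhat \<alpha> D"
      if \<alpha>: "\<alpha> \<in> param_set \<Gamma> am ap" for \<alpha>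
    proof -
      have "cw_loss_pop L f yhat (astar S) D \<le> cw_loss_emp L f yhat (astar S) n S + t + 2 * \<Delta>"
        using dev[OF S, of "astar S"] astar_min[rule_format, of S] unfolding abs_le_iff by linarith
      also have "\<dots> \<le> cw_loss_emp L f yhat \<alpha> n S + t + 2 * \<Delta>"
        using astar_min \<alpha> by auto
      also have "\<dots> \<le> cw_loss_pop L f yhat \<alpha> D + 2 * t + 4 * \<Delta>"
        using dev[OF S \<alpha>] by linarith
      finally show ?thesis by simp
    qed
    then have "cw_loss_pop L f yhat (astar S) D - (2 * t + 4 * \<Delta>) \<le> (INF \<alpha>\<in>param_set \<Gamma> am ap. cw_loss_pop L f yhat \<alpha> D)"
      by (intro cINF_greatest ne) auto
    then show "cw_loss_pop L f yhat (astar S) D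
        \<le> (INF \<alpha>\<in>param_set \<Gamma> am ap. cw_loss_pop L f yhat \<alpha> D)
           + 2 * sqrt (ln (2 * Nb / \<delta>) / (2 * real n)) + 4 * (2 * Lf * Lc * \<rho>)"
      unfolding t_def \<Delta>_def by simp
  qed
qed



lemma floor_center:
  fixes q :: real
  assumes "q \<ge> 0"
  shows "\<bar>q - (real (nat \<lfloor>q\<rfloor>) + 1/2)\<bar> \<le> 1/2"
proof -
  have "real (nat \<lfloor>q\<rfloor>) = of_int \<lfloor>q\<rfloor>" using assms by simp
  moreover have "of_int \<lfloor>q\<rfloor> \<le> q" by (rule of_int_floor_le)
  moreover have "q < of_int \<lfloor>q\<rfloor> + 1" by (rule real_of_int_floor_add_one_gt)
  ultimately show ?thesis by linarith
qed

lemma nat_floor_le_real: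
  fixes Q :: real
  assumes "Q \<ge> 0"
  shows "real (nat \<lfloor>Q\<rfloor>) \<le> Q"
  using assms of_int_floor_le[of Q] by simp

lemma nat_floor_mono': "q \<le> (Q::real) \<Longrightarrow> nat \<lfloor>q\<rfloor> \<le> nat \<lfloor>Q\<rfloor>"
  by (simp add: floor_mono nat_mono)

theorem theorem2:
  fixes D :: "('x \<times> 'k::finite) measure"
    and f :: "'x \<Rightarrow> real^'k"
    and yhat :: "'x \<Rightarrow> 'k"
    and L :: "real^'k \<Rightarrow> real^'k \<Rightarrow> real"
    and Lf Lc \<Gamma> am ap \<delta> :: real
    and n :: nat
    and astar :: "(nat \<Rightarrow> 'x \<times> 'k) \<Rightarrow> real \<times> (real^'k)"
  assumes D: "prob_space D"
    and meas_f: "(\<lambda>p. f (fst p)) \<in> borel_measurable D"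
    and meas_yhat: "(\<lambda>p. yhat (fst p)) \<in> measurable D (count_space UNIV)"
    and meas_y: "snd \<in> measurable D (count_space UNIV)"
    and meas_L: "(\<lambda>(u, v). L u v) \<in> borel_measurable borel"
    and bound_f: "\<forall>x. norm (f x) \<le> Lf"
    and Lf_pos: "Lf > 0" and Lc_pos: "Lc > 0"
    and L_range: "\<forall>u v. 0 \<le> L u v \<and> L u v \<le> 1"
    and L_lip: "\<forall>u v w. \<bar>L u v - L u w\<bar> \<le> Lc * dist v w"
    and yhat_argmax: "\<forall>x k. softmax (f x) $ k \<le> softmax (f x) $ yhat x"
    and \<Gamma>_pos: "\<Gamma> > 0"
    and am_ap: "am \<le> ap" and gap: "ap - am \<ge> 2 * \<Gamma>"
    and n_pos: "n \<ge> 1"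
    and \<delta>: "0 < \<delta>" "\<delta> < 1"
    and astar_min: "\<forall>S. astar S \<in> param_set \<Gamma> am ap \<and>
        (\<forall>\<alpha>\<in>param_set \<Gamma> am ap. cw_loss_emp L f yhat (astar S) n S \<le> cw_loss_emp L f yhat \<alpha> n S)"
  shows "\<exists>A\<in>sets (PiM {..<n} (\<lambda>_. D)).
     measure (PiM {..<n} (\<lambda>_. D)) A \<ge> 1 - \<delta> \<and>
     (\<forall>S\<in>A. cw_loss_pop L f yhat (astar S) D
        \<le> (INF \<alpha>\<in>param_set \<Gamma> am ap. cw_loss_pop L f yhat \<alpha> D)
           + 8 * sqrt (ln (2 / \<delta>) / real n)
           + (if \<Gamma> \<le> 1 / (8 * sqrt (real n) * Lf * Lc)
              then 4 / sqrt (real n) * sqrt (ln (1 + 4 * (ap - am) * sqrt (real n) * Lf * Lc))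
              else 4 / sqrt (real n) * sqrt (ln ((ap - am) / (2 * \<Gamma>))
                     + (real CARD('k) + 1) * ln (8 * \<Gamma> * sqrt (real n) * Lf * Lc))))"

proof -
  have LL: "Lf * Lc > 0" using Lf_pos Lc_pos by simp
  have sn: "sqrt (real n) > 0" using n_pos by simp
  define l where "l = ln (2 / \<delta>)"
  have l2: "l \<ge> ln 2" unfolding l_def using \<delta> by (subst ln_le_cancel_iff) (auto simp: field_simps)
  have lhalf: "l \<ge> 1/2" using l2 ln2_half by linarith
  have nr: "real n > 0" using n_pos by simp
  show ?thesis
  proof (cases "\<Gamma> \<le> 1 / (8 * sqrt (real n) * Lf * Lc)")
    case c1: True
    define \<epsilon> where "\<epsilon> = 1 / (8 * sqrt (real n) * Lf * Lc)"
    have \<epsilon>0: "\<epsilon> > 0" unfolding \<epsilon>_def using sn Lf_pos Lc_pos by simp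
    define m where "m = nat \<lfloor>(ap - am) / (2 * \<epsilon>)\<rfloor>"
    define G where "G = (\<lambda>i::nat. (\<chi> j::'k. am + 2 * \<epsilon> * real i + \<epsilon>)) ` {..m}"
    define Nb where "Nb = 1 + 4 * (ap - am) * sqrt (real n) * Lf * Lc"
    have xeq: "(ap - am) / (2 * \<epsilon>) = 4 * (ap - am) * sqrt (real n) * Lf * Lc"
      unfolding \<epsilon>_def using sn Lf_pos Lc_pos by (simp add: field_simps)
    have Nb1: "Nb \<ge> 1" unfolding Nb_def using am_ap sn Lf_pos Lc_pos by (simp add: mult_nonneg_nonneg)
    have finG: "finite G" unfolding G_def by simp
    have cardG: "real (card G) \<le> Nb"
    proof -
      have "card G \<le> card {..m}" unfolding G_def by (rule card_image_le) simp
      then have "real (card G) \<le> real m + 1" by simp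
      also have "real m \<le> (ap - am) / (2 * \<epsilon>)"
        unfolding m_def by (rule nat_floor_le_real) (use am_ap \<epsilon>0 in simp)
      finally show ?thesis unfolding Nb_def xeq by simp
    qed
    have cover: "\<forall>\<alpha>\<in>param_set \<Gamma> am ap. \<exists>a\<in>G. \<forall>j. \<bar>snd \<alpha> $ j - a $ j\<bar> \<le> \<Gamma> + \<epsilon>"
    proof
      fix \<alpha> :: "real \<times> (real^'k)" assume "\<alpha> \<in> param_set \<Gamma> am ap"
      then have a1: "\<forall>j. \<bar>snd \<alpha> $ j - fst \<alpha>\<bar> \<le> \<Gamma>" and a2: "am \<le> fst \<alpha>" "fst \<alpha> \<le> ap"
        by (auto simp: param_set_def)
      define q where "q = (fst \<alpha> - am) / (2 * \<epsilon>)"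
      have q0: "q \<ge> 0" unfolding q_def using a2 \<epsilon>0 by simp
      define i where "i = nat \<lfloor>q\<rfloor>"
      have im: "i \<le> m" unfolding i_def m_def q_def
        by (rule nat_floor_mono') (use a2 \<epsilon>0 in \<open>simp add: divide_right_mono\<close>)
      have fc: "\<bar>q - (real i + 1/2)\<bar> \<le> 1/2" unfolding i_def by (rule floor_center[OF q0])
      have "\<bar>fst \<alpha> - (am + 2 * \<epsilon> * real i + \<epsilon>)\<bar> = 2 * \<epsilon> * \<bar>q - (real i + 1/2)\<bar>"
      proof -
        have "fst \<alpha> - (am + 2 * \<epsilon> * real i + \<epsilon>) = 2 * \<epsilon> * (q - (real i + 1/2))"
          unfolding q_def using \<epsilon>0 by (simp add: field_simps)
        then show ?thesis using \<epsilon>0 by (simp add: abs_mult)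
      qed
      also have "\<dots> \<le> \<epsilon>" using fc \<epsilon>0 by (simp add: mult_left_mono[of _ "1/2" "2*\<epsilon>", simplified])
      finally have c: "\<bar>fst \<alpha> - (am + 2 * \<epsilon> * real i + \<epsilon>)\<bar> \<le> \<epsilon>" .
      show "\<exists>a\<in>G. \<forall>j. \<bar>snd \<alpha> $ j - a $ j\<bar> \<le> \<Gamma> + \<epsilon>"
      proof (intro bexI allI)
        fix j
        show "\<bar>snd \<alpha> $ j - (\<chi> j::'k. am + 2 * \<epsilon> * real i + \<epsilon>) $ j\<bar> \<le> \<Gamma> + \<epsilon>"
          using c a1[rule_format, of j] by simp
        show "(\<chi> j::'k. am + 2 * \<epsilon> * real i + \<epsilon>) \<in> G" unfolding G_def using im by auto
      qed
    qed
    have \<rho>0: "\<Gamma> + \<epsilon> \<ge> 0" using \<Gamma>_pos \<epsilon>0 by simp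
    obtain A where A: "A \<in> sets (PiM {..<n} (\<lambda>_. D))" "measure (PiM {..<n} (\<lambda>_. D)) A \<ge> 1 - \<delta>"
      and bnd: "\<forall>S\<in>A. cw_loss_pop L f yhat (astar S) D
        \<le> (INF \<alpha>\<in>param_set \<Gamma> am ap. cw_loss_pop L f yhat \<alpha> D)
           + 2 * sqrt (ln (2 * Nb / \<delta>) / (2 * real n)) + 4 * (2 * Lf * Lc * (\<Gamma> + \<epsilon>))"
      using generic_bound[OF D meas_f meas_yhat meas_y meas_L bound_f Lc_pos L_range L_lip am_ap \<Gamma>_pos n_pos \<delta> astar_min finG cardG Nb1 cover]
      by (elim bexE conjE) (rule that)
    have \<Delta>: "4 * (2 * Lf * Lc * (\<Gamma> + \<epsilon>)) \<le> 2 / sqrt (real n)"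
    proof -
      have "4 * (2 * Lf * Lc * (\<Gamma> + \<epsilon>)) \<le> 4 * (2 * Lf * Lc * (2 * \<epsilon>))"
        using c1 Lf_pos Lc_pos unfolding \<epsilon>_def[symmetric] by (intro mult_left_mono) auto
      also have "\<dots> = 2 / sqrt (real n)" unfolding \<epsilon>_def using sn Lf_pos Lc_pos by (simp add: field_simps)
      finally show ?thesis .
    qed
    have lnNb: "ln (2 * Nb / \<delta>) = l + ln Nb"
    proof -
      have "ln (2 * Nb / \<delta>) = ln 2 + ln Nb - ln \<delta>" using Nb1 \<delta> by (simp add: ln_div ln_mult)
      moreover have "ln (2 / \<delta>) = ln 2 - ln \<delta>" using \<delta> by (simp add: ln_div)
      ultimately show ?thesis unfolding l_def by simp
    qed
    have q0: "ln Nb \<ge> 0" using Nb1 by simp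
    have key: "2 * sqrt (ln (2 * Nb / \<delta>) / (2 * real n)) + 4 * (2 * Lf * Lc * (\<Gamma> + \<epsilon>))
        \<le> 8 * sqrt (l / real n) + 4 / sqrt (real n) * sqrt (ln Nb)"
      unfolding lnNb by (rule core1[OF lhalf q0 nr \<Delta>])
    show ?thesis
    proof (intro bexI[OF _ A(1)] conjI A(2) ballI)
      fix S assume "S \<in> A"
      with bnd key c1 show "cw_loss_pop L f yhat (astar S) D
        \<le> (INF \<alpha>\<in>param_set \<Gamma> am ap. cw_loss_pop L f yhat \<alpha> D)
           + 8 * sqrt (ln (2 / \<delta>) / real n)
           + (if \<Gamma> \<le> 1 / (8 * sqrt (real n) * Lf * Lc)
              then 4 / sqrt (real n) * sqrt (ln (1 + 4 * (ap - am) * sqrt (real n) * Lf * Lc))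
              else 4 / sqrt (real n) * sqrt (ln ((ap - am) / (2 * \<Gamma>))
                     + (real CARD('k) + 1) * ln (8 * \<Gamma> * sqrt (real n) * Lf * Lc)))"
        unfolding l_def Nb_def by fastforce
    qed
  next
    case c2: False
    define r where "r = 8 * \<Gamma> * sqrt (real n) * Lf * Lc"
    have r1: "r > 1"
    proof -
      have "1 / (8 * sqrt (real n) * Lf * Lc) < \<Gamma>" using c2 by simp
      then have "1 < \<Gamma> * (8 * sqrt (real n) * Lf * Lc)"
        using sn Lf_pos Lc_pos by (simp add: divide_less_eq)
      then show ?thesis unfolding r_def by (simp add: algebra_simps)
    qed
    define P where "P = nat \<lfloor>r\<rfloor>"
    have Pr: "real P \<le> r" unfolding P_def by (rule nat_floor_le_real) (use r1 in simp)
    have Pr2: "real P \<ge> r / 2"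
    proof -
      have "real P = of_int \<lfloor>r\<rfloor>" unfolding P_def using r1 by simp
      moreover have "r < of_int \<lfloor>r\<rfloor> + 1" by (rule real_of_int_floor_add_one_gt)
      moreover have "(1::real) \<le> of_int \<lfloor>r\<rfloor>" using r1 by simp
      ultimately show ?thesis by linarith
    qed
    have P1: "P \<ge> 1" using Pr2 r1 by simp
    define h where "h = 4 * \<Gamma> / real P"
    have h0: "h > 0" unfolding h_def using P1 \<Gamma>_pos by simp
    define x where "x = (ap - am) / (2 * \<Gamma>)"
    have x1: "x \<ge> 1" unfolding x_def using gap \<Gamma>_pos by simp
    define m where "m = nat \<lfloor>x\<rfloor>"
    define pt where "pt = (\<lambda>(b::nat, c::'k \<Rightarrow> nat). (\<chi> j::'k. am + 2 * \<Gamma> * real b - \<Gamma> + h * (real (c j) + 1/2)))"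
    define G where "G = pt ` ({..m} \<times> (PiE UNIV (\<lambda>_::'k. {..<P})))"
    define Nb where "Nb = 2 * x * r ^ CARD('k)"
    have rK: "r ^ CARD('k) \<ge> 1" using r1 by simp
    have Nb1: "Nb \<ge> 1"
    proof -
      have "1 \<le> x * r ^ CARD('k)" using x1 rK by (metis mult_mono' one_le_mult_iff zero_le_one order.trans le_numeral_extra(4) mult_1)
      then show ?thesis unfolding Nb_def by simp
    qed
    have finG: "finite G" unfolding G_def by (simp add: finite_PiE)
    have cardG: "real (card G) \<le> Nb"
    proof -
      have "card G \<le> card ({..m} \<times> (PiE UNIV (\<lambda>_::'k. {..<P})))" unfolding G_def
        by (rule card_image_le) (simp add: finite_PiE)
      also have "\<dots> = (m + 1) * P ^ CARD('k)"
        by (simp add: card_cartesian_product card_PiE)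
      finally have "real (card G) \<le> (real m + 1) * real P ^ CARD('k)"
        by (metis of_nat_le_iff of_nat_mult of_nat_power of_nat_Suc add.commute Suc_eq_plus1)
      also have "\<dots> \<le> (x + 1) * r ^ CARD('k)"
      proof (intro mult_mono power_mono)
        show "real m + 1 \<le> x + 1" unfolding m_def using nat_floor_le_real[of x] x1 by simp
      qed (use x1 r1 Pr in auto)
      also have "\<dots> \<le> Nb" unfolding Nb_def using x1 rK by (simp add: mult_right_mono)
      finally show ?thesis .
    qed
    have cover: "\<forall>\<alpha>\<in>param_set \<Gamma> am ap. \<exists>a\<in>G. \<forall>j. \<bar>snd \<alpha> $ j - a $ j\<bar> \<le> h / 2"
    proof
      fix \<alpha> :: "real \<times> (real^'k)" assume "\<alpha> \<in> param_set \<Gamma> am ap"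
      then have a1: "\<forall>j. \<bar>snd \<alpha> $ j - fst \<alpha>\<bar> \<le> \<Gamma>" and a2: "am \<le> fst \<alpha>" "fst \<alpha> \<le> ap"
        by (auto simp: param_set_def)
      define qb where "qb = (fst \<alpha> - am) / (2 * \<Gamma>)"
      have qb0: "qb \<ge> 0" unfolding qb_def using a2 \<Gamma>_pos by simp
      define b where "b = nat \<lfloor>qb\<rfloor>"
      have bm: "b \<le> m" unfolding b_def m_def qb_def x_def
        by (rule nat_floor_mono') (use a2 \<Gamma>_pos in \<open>simp add: divide_right_mono\<close>)
      have bq: "real b \<le> qb" "qb < real b + 1"
      proof -
        have "real b = of_int \<lfloor>qb\<rfloor>" unfolding b_def using qb0 by simp
        moreover have "of_int \<lfloor>qb\<rfloor> \<le> qb" by (rule of_int_floor_le)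
        moreover have "qb < of_int \<lfloor>qb\<rfloor> + 1" by (rule real_of_int_floor_add_one_gt)
        ultimately show "real b \<le> qb" "qb < real b + 1" by linarith+
      qed
      have bq': "2 * \<Gamma> * real b \<le> fst \<alpha> - am" "fst \<alpha> - am < 2 * \<Gamma> * real b + 2 * \<Gamma>"
        using bq \<Gamma>_pos unfolding qb_def by (simp_all add: field_simps)
      define lo where "lo = am + 2 * \<Gamma> * real b - \<Gamma>"
      define c where "c = (\<lambda>j::'k. nat \<lfloor>(snd \<alpha> $ j - lo) / h\<rfloor>)"
      have w0: "(snd \<alpha> $ j - lo) / h \<ge> 0" for j
        using a1[rule_format, of j] bq' h0 unfolding lo_def by (simp add: abs_le_iff)
      have wP: "(snd \<alpha> $ j - lo) / h < real P" for j
      proof -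
        have "snd \<alpha> $ j - lo < 4 * \<Gamma>"
          using a1[rule_format, of j] bq' unfolding lo_def by (simp add: abs_le_iff)
        also have "4 * \<Gamma> = real P * h" unfolding h_def using P1 by simp
        finally show ?thesis using h0 by (simp add: divide_less_eq)
      qed
      have cP: "c j < P" for j
      proof -
        have "\<lfloor>(snd \<alpha> $ j - lo) / h\<rfloor> < int P" using wP[of j] by (simp add: floor_less_iff)
        moreover have z0: "0 \<le> \<lfloor>(snd \<alpha> $ j - lo) / h\<rfloor>" using w0[of j] by simp
        ultimately show ?thesis unfolding c_def using nat_less_iff[OF z0] by simp
      qed
      have cPi: "c \<in> PiE UNIV (\<lambda>_::'k. {..<P})" using cP by (simp add: PiE_iff)
      show "\<exists>a\<in>G. \<forall>j. \<bar>snd \<alpha> $ j - a $ j\<bar> \<le> h / 2"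
      proof (intro bexI allI)
        fix j
        have fc: "\<bar>(snd \<alpha> $ j - lo) / h - (real (c j) + 1/2)\<bar> \<le> 1/2"
          unfolding c_def by (rule floor_center[OF w0])
        have "snd \<alpha> $ j - pt (b, c) $ j = h * ((snd \<alpha> $ j - lo) / h - (real (c j) + 1/2))"
          unfolding pt_def lo_def using h0 by (simp add: field_simps)
        then have "\<bar>snd \<alpha> $ j - pt (b, c) $ j\<bar> = h * \<bar>(snd \<alpha> $ j - lo) / h - (real (c j) + 1/2)\<bar>"
          using h0 by (simp add: abs_mult)
        also have "\<dots> \<le> h * (1/2)" using fc h0 by (intro mult_left_mono) auto
        finally show "\<bar>snd \<alpha> $ j - pt (b, c) $ j\<bar> \<le> h / 2" by simp
        show "pt (b, c) \<in> G" unfolding G_def using bm cPi by auto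
      qed
    qed
    obtain A where A: "A \<in> sets (PiM {..<n} (\<lambda>_. D))" "measure (PiM {..<n} (\<lambda>_. D)) A \<ge> 1 - \<delta>"
      and bnd: "\<forall>S\<in>A. cw_loss_pop L f yhat (astar S) D
        \<le> (INF \<alpha>\<in>param_set \<Gamma> am ap. cw_loss_pop L f yhat \<alpha> D)
           + 2 * sqrt (ln (2 * Nb / \<delta>) / (2 * real n)) + 4 * (2 * Lf * Lc * (h / 2))"
      using generic_bound[OF D meas_f meas_yhat meas_y meas_L bound_f Lc_pos L_range L_lip am_ap \<Gamma>_pos n_pos \<delta> astar_min finG cardG Nb1 cover]
      by (elim bexE conjE) (rule that)
    have \<Delta>: "4 * (2 * Lf * Lc * (h / 2)) \<le> 4 / sqrt (real n)"
    proof -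
      have "4 * (2 * Lf * Lc * (h / 2)) = 16 * \<Gamma> * Lf * Lc / real P" unfolding h_def by simp
      also have "\<dots> \<le> 16 * \<Gamma> * Lf * Lc / (r / 2)"
        using Pr2 r1 \<Gamma>_pos Lf_pos Lc_pos by (intro divide_left_mono) auto
      also have "\<dots> = 4 / sqrt (real n)" unfolding r_def using sn Lf_pos Lc_pos \<Gamma>_pos by (simp add: field_simps)
      finally show ?thesis .
    qed
    define e where "e = ln x + (real CARD('k) + 1) * ln r"
    have lnx: "ln x \<ge> 0" using x1 by simp
    have lnr: "ln r \<ge> 0" using r1 by simp
    have e0: "e \<ge> 0" unfolding e_def using lnx lnr by simp
    have lnNb0: "ln Nb = ln 2 + ln x + real CARD('k) * ln r"
      unfolding Nb_def using x1 r1 by (simp add: ln_mult ln_realpow)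
    have q: "ln Nb \<le> ln 2 + e" unfolding lnNb0 e_def using lnr by (simp add: algebra_simps)
    have lnNb: "ln (2 * Nb / \<delta>) = l + ln Nb"
    proof -
      have "ln (2 * Nb / \<delta>) = ln 2 + ln Nb - ln \<delta>" using Nb1 \<delta> by (simp add: ln_div ln_mult)
      moreover have "ln (2 / \<delta>) = ln 2 - ln \<delta>" using \<delta> by (simp add: ln_div)
      ultimately show ?thesis unfolding l_def by simp
    qed
    have key: "2 * sqrt (ln (2 * Nb / \<delta>) / (2 * real n)) + 4 * (2 * Lf * Lc * (h / 2))
        \<le> 8 * sqrt (l / real n) + 4 / sqrt (real n) * sqrt e"
      unfolding lnNb by (rule core2[OF l2 e0 q nr \<Delta>])
    show ?thesis
    proof (intro bexI[OF _ A(1)] conjI A(2) ballI)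
      fix S assume "S \<in> A"
      with bnd key c2 show "cw_loss_pop L f yhat (astar S) D
        \<le> (INF \<alpha>\<in>param_set \<Gamma> am ap. cw_loss_pop L f yhat \<alpha> D)
           + 8 * sqrt (ln (2 / \<delta>) / real n)
           + (if \<Gamma> \<le> 1 / (8 * sqrt (real n) * Lf * Lc)
              then 4 / sqrt (real n) * sqrt (ln (1 + 4 * (ap - am) * sqrt (real n) * Lf * Lc))
              else 4 / sqrt (real n) * sqrt (ln ((ap - am) / (2 * \<Gamma>))
                     + (real CARD('k) + 1) * ln (8 * \<Gamma> * sqrt (real n) * Lf * Lc)))"
        unfolding l_def e_def x_def r_def by fastforce
    qed
  qed
qed


end
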